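(* Assume Cramér's conjecture. Then for every positive integer $m$ there exists $n_0$ such that every integer $n\ge n_0$ having exactly $m$ distinct prime factors satisfies Condition 1.
   Context: Let $p_i$ denote the $i$-th prime. Cramér's conjecture: there exist constants $M$ and $N$ such that whenever $p_i\ge N$, $p_{i+1}-p_i\le M(\log p_i)^2$. A positive integer $n$ satisfies Condition 1 if there exist primes $p$ and $q$ such that for all integers $k$ with $1\le k\le n-1$, $\binom{n}{k}$ is divisible by $p$ or $q$. *)

theory Defs
  imports "HOL-Computational_Algebra.Primes" "HOL-Library.Infinite_Set" Complex_Main
begin

(* nth_prime i : the i-th prime, 0-indexed (nth_prime 0 = 2) *)
definition nth_prime :: "nat \<Rightarrow> nat" where
  "nth_prime i = enumerate {p::nat. prime p} i"

definition cramer_conjecture :: bool where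
  "cramer_conjecture \<longleftrightarrow>
     (\<exists>(M::real) (N::real). \<forall>i. real (nth_prime i) \<ge> N \<longrightarrow>
        real (nth_prime (Suc i)) - real (nth_prime i) \<le> M * (ln (real (nth_prime i)))^2)"

definition condition1 :: "nat \<Rightarrow> bool" where
  "condition1 n \<longleftrightarrow>
     (\<exists>p q::nat. prime p \<and> prime q \<and>
        (\<forall>k. 1 \<le> k \<and> k \<le> n - 1 \<longrightarrow> p dvd (n choose k) \<or> q dvd (n choose k)))"

end

theory Submission
  imports Defs "HOL-Real_Asymp.Real_Asymp"
begin

lemma dvd_choose_pp:
  fixes n k q e :: nat
  assumes "prime q" "q ^ e dvd n" "0 < k" "k < q ^ e"
  shows "q dvd (n choose k)"
proof (rule ccontr)
  assume nd: "\<not> q dvd (n choose k)"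
  have "q ^ e dvd k * (n choose k)"
    using assms(2) times_binomial_minus1_eq[OF assms(3), of n] by (metis dvd_mult2)
  moreover have "coprime (q ^ e) (n choose k)"
    using nd assms(1) by (simp add: prime_imp_coprime)
  ultimately have "q ^ e dvd k" using coprime_dvd_mult_left_iff by blast
  then show False using assms(3,4) by (simp add: nat_dvd_not_less)
qed

lemma dvd_choose_big:
  fixes n k p :: nat
  assumes "prime p" "p \<le> n" "0 < k" "k < p" "n - k < p" "k \<le> n"
  shows "p dvd (n choose k)"
proof -
  have "p dvd fact n" using assms by (simp add: prime_dvd_fact_iff)
  moreover have "\<not> p dvd (fact k * fact (n-k))"
    using assms by (simp add: prime_dvd_mult_iff prime_dvd_fact_iff)
  moreover have "(fact n::nat) = fact k * fact (n-k) * (n choose k)"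
    using binomial_fact_lemma assms by auto
  ultimately show ?thesis using assms(1)
    by (metis prime_dvd_mult_iff)
qed

lemma key:
  fixes n p q e :: nat
  assumes "prime p" "p \<le> n" "prime q" "q ^ e dvd n" "n - p < q ^ e"
  shows "condition1 n"
  unfolding condition1_def
proof (intro exI conjI allI impI)
  show "prime p" "prime q" by fact+
  fix k assume k: "1 \<le> k \<and> k \<le> n - 1"
  show "p dvd (n choose k) \<or> q dvd (n choose k)"
  proof (cases "k \<le> n - p")
    case True
    then show ?thesis using dvd_choose_pp[OF assms(3,4), of k] k assms(5) by auto
  next
    case False
    show ?thesis
    proof (cases "k < p")
      case True
      then show ?thesis using dvd_choose_big[OF assms(1,2), of k] k False by auto
    next
      case F2: False
      have "q dvd (n choose (n - k))"
        using dvd_choose_pp[OF assms(3,4), of "n-k"] k F2 assms(5) by auto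
      then show ?thesis using k binomial_symmetric[of k n] by auto
    qed
  qed
qed

lemma asym:
  fixes c :: real and m :: real
  assumes "c > 0" "m > 0"
  shows "eventually (\<lambda>x. m * ln (c * ln x ^ 2) < ln x) at_top"
  using assms by real_asymp

theorem mainTheorem16:
  assumes "cramer_conjecture"
  shows "\<forall>m::nat. m > 0 \<longrightarrow> (\<exists>n0::nat. \<forall>n::nat. n \<ge> n0 \<and> card (prime_factors n) = m \<longrightarrow> condition1 n)"
proof (intro allI impI)
  fix m :: nat assume m: "m > 0"
  from assms obtain M N :: real where MN: "\<forall>i. real (nth_prime i) \<ge> N \<longrightarrow>
        real (nth_prime (Suc i)) - real (nth_prime i) \<le> M * (ln (real (nth_prime i)))^2"
    unfolding cramer_conjecture_def by blast
  define c where "c = max M 1"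
  have c1: "c \<ge> 1" unfolding c_def by simp
  have "eventually (\<lambda>x. real m * ln (c * ln x ^ 2) < ln x) at_top"
    using asym[of c "real m"] c1 m by simp
  then have "eventually (\<lambda>n::nat. real m * ln (c * ln (real n) ^ 2) < ln (real n)) sequentially"
    by (rule eventually_compose_filterlim[OF _ filterlim_real_sequentially])
  then obtain n1 where n1: "\<And>n. n \<ge> n1 \<Longrightarrow> real m * ln (c * ln (real n) ^ 2) < ln (real n)"
    unfolding eventually_sequentially by blast
  obtain P0 :: nat where P0: "prime P0" "P0 > nat \<lceil>N\<rceil>" using bigger_prime by blast
  have P0N: "real P0 \<ge> N" using P0(2) by linarith
  show "\<exists>n0::nat. \<forall>n::nat. n \<ge> n0 \<and> card (prime_factors n) = m \<longrightarrow> condition1 n"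
  proof (intro exI allI impI)
    fix n assume n: "max n1 (max P0 2) \<le> n \<and> card (prime_factors n) = m"
    have n2: "n \<ge> 2" using n by simp
    define S where "S = {p. prime p \<and> p \<le> n}"
    have finS: "finite S" unfolding S_def by auto
    have P0S: "P0 \<in> S" using n P0 unfolding S_def by auto
    define p where "p = Max S"
    have pS: "p \<in> S" unfolding p_def using finS P0S Max_in by blast
    have pmax: "\<And>r. prime r \<Longrightarrow> r \<le> n \<Longrightarrow> r \<le> p"
      unfolding p_def using finS S_def by auto
    have pp: "prime p" "p \<le> n" using pS S_def by auto
    have P0p: "P0 \<le> p" using pmax P0 n by auto
    have inf: "infinite {p::nat. prime p}" using primes_infinite .
    obtain i where i: "nth_prime i = p"
      unfolding nth_prime_def using enumerate_Ex[OF inf] pp by auto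
    have nxt: "nth_prime (Suc i) > n"
    proof (rule ccontr)
      assume a: "\<not> n < nth_prime (Suc i)"
      have pr: "prime (nth_prime (Suc i))"
        unfolding nth_prime_def using enumerate_in_set[OF inf] by auto
      have gt: "nth_prime (Suc i) > p"
        unfolding i[symmetric] nth_prime_def using enumerate_mono[OF _ inf] by auto
      have "nth_prime (Suc i) \<le> p" using pmax[OF pr] a by simp
      then show False using gt by simp
    qed
    have "real (nth_prime (Suc i)) - real p \<le> M * (ln (real p))^2"
      using MN[rule_format, of i] i P0N P0p by auto
    also have "\<dots> \<le> c * (ln (real p))^2"
      unfolding c_def by (intro mult_right_mono) auto
    also have "\<dots> \<le> c * (ln (real n))^2"
    proof -
      have "real p \<ge> 1" using prime_gt_1_nat[OF pp(1)] by simp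
      then have "ln (real p) \<ge> 0" by simp
      moreover have "ln (real p) \<le> ln (real n)" using prime_gt_0_nat[OF pp(1)] pp(2) by simp
      ultimately show ?thesis using c1 by (intro mult_left_mono power_mono) auto
    qed
    finally have bnd: "real (n - p) < c * (ln (real n))^2"
      using nxt pp by (simp add: of_nat_diff)
    define B where "B = c * (ln (real n))^2"
    have lnpos: "ln (real n) > 0" using n2 by simp
    have Bpos: "B > 0" unfolding B_def using c1 lnpos by simp
    have "real m * ln B < ln (real n)" unfolding B_def using n1 n by auto
    then have "ln (B ^ m) < ln (real n)" by (simp add: ln_realpow)
    then have Bm: "B ^ m < real n" using Bpos n2 by simp
    have "\<exists>q \<in> prime_factors n. q ^ multiplicity q n > n - p"
    proof (rule ccontr)
      assume "\<not> ?thesis"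
      then have le: "\<And>q. q \<in> prime_factors n \<Longrightarrow> q ^ multiplicity q n \<le> n - p" by auto
      have "prime_factors n \<noteq> {}" using n m by auto
      then obtain q0 where q0: "q0 \<in> prime_factors n" by blast
      have "q0 ^ multiplicity q0 n \<ge> 1" using q0
        by (metis in_prime_factors_imp_prime one_le_power prime_ge_1_nat)
      then have np1: "n - p \<ge> 1" using le[OF q0] by linarith
      have "n = (\<Prod>q \<in> prime_factors n. q ^ multiplicity q n)"
        using prod_prime_factors[of n] n2 by simp
      also have "\<dots> \<le> (n - p) ^ m"
        using n np1 le by (intro prod_le_power) auto
      finally have "real n \<le> real (n - p) ^ m"
        by (metis of_nat_le_iff of_nat_power)
      also have "\<dots> \<le> B ^ m" using bnd B_def by (intro power_mono) auto
      finally show False using Bm by simp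
    qed
    then obtain q where q: "q \<in> prime_factors n" "q ^ multiplicity q n > n - p" by blast
    show "condition1 n"
      using key[OF pp, of q "multiplicity q n"] q multiplicity_dvd[of q n] by auto
  qed
qed

end
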